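(* Let $k\geq 3$ and consider the single braided Coxeter group $W^3_k$ with generators $s_1,s_2,s_3$. For all $\lambda\in\mathbb{N}_0$ and $1\le r\le 3$, \[ l_R(\omega((s_1s_2s_3)^\lambda s_1\cdots s_r))\leq \lambda+r-2\left\lfloor\frac{\lambda+\mathbf{1}_{r\geq2}}{k}\right\rfloor. \]
   Context: $W^n_k=\langle s_1,\dots,s_n\mid s_i^2=(s_is_j)^{k}=1\ \forall i\neq j\rangle$. $\omega$ maps a word over $\{s_1,\dots,s_n\}$ to the element it represents. $l_R$ is the reflection length: minimal number of reflections (conjugates of generators) whose product is the element. $\mathbf{1}_{r\ge2}$ is $1$ if $r\ge2$ and $0$ otherwise; $s_1\cdots s_r$ denotes the product of the first $r$ generators. *)

theory Defs
  imports Main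
begin

definition relators :: "nat \<Rightarrow> nat \<Rightarrow> nat list set" where
  "relators n k =
     {[i, i] | i. i \<in> {1..n}} \<union>
     {concat (replicate k [i, j]) | i j. i \<in> {1..n} \<and> j \<in> {1..n} \<and> i \<noteq> j}"

definition is_word :: "nat \<Rightarrow> nat list \<Rightarrow> bool" where
  "is_word n w \<longleftrightarrow> set w \<subseteq> {1..n}"

text \<open>Two words represent the same element of W^n_k (omega u = omega v) iff they are related
  by the congruence generated by the relators.\<close>
inductive coxeq :: "nat \<Rightarrow> nat \<Rightarrow> nat list \<Rightarrow> nat list \<Rightarrow> bool" for n k where
  refl: "coxeq n k w w"
| sym: "coxeq n k u v \<Longrightarrow> coxeq n k v u"
| trans: "coxeq n k u v \<Longrightarrow> coxeq n k v w \<Longrightarrow> coxeq n k u w"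
| rel: "r \<in> relators n k \<Longrightarrow> coxeq n k (u @ r @ v) (u @ v)"

text \<open>Reflections: conjugates w s_i w^{-1} of generators; since generators are involutions,
  w^{-1} is represented by rev w.\<close>
definition refl_word :: "nat \<Rightarrow> nat list \<Rightarrow> bool" where
  "refl_word n t \<longleftrightarrow> (\<exists>w i. is_word n w \<and> i \<in> {1..n} \<and> t = w @ [i] @ rev w)"

definition lR :: "nat \<Rightarrow> nat \<Rightarrow> nat list \<Rightarrow> nat" where
  "lR n k w = (LEAST m. \<exists>ts. length ts = m \<and> (\<forall>t\<in>set ts. refl_word n t)
                              \<and> coxeq n k (concat ts) w)"

end

theory Submission
  imports Defs
begin

lemma coxeq_cong: "coxeq n k x y \<Longrightarrow> coxeq n k (u @ x @ v) (u @ y @ v)"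
proof (induction arbitrary: u v rule: coxeq.induct)
  case (refl w) then show ?case by (rule coxeq.refl)
next
  case (sym a b) then show ?case by (blast intro: coxeq.sym)
next
  case (trans a b c) then show ?case by (blast intro: coxeq.trans)
next
  case (rel r u' v')
  have "coxeq n k ((u @ u') @ r @ (v' @ v)) ((u @ u') @ (v' @ v))"
    using rel by (rule coxeq.rel)
  then show ?case by simp
qed

lemma coxeq_cancel:
  assumes "i \<in> {1..n}"
  shows "coxeq n k (u @ [i,i] @ v) (u @ v)"
  by (rule coxeq.rel) (use assms in \<open>auto simp: relators_def\<close>)

lemma coxeq_alt:
  assumes "a \<in> {1..n}" "b \<in> {1..n}" "a \<noteq> b"
  shows "coxeq n k (u @ concat (replicate k [a,b]) @ v) (u @ v)"
  by (rule coxeq.rel) (use assms in \<open>auto simp: relators_def\<close>)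

lemma coxeq_rev: "is_word n w \<Longrightarrow> coxeq n k (w @ rev w) []"
proof (induction w)
  case Nil then show ?case by (simp add: coxeq.refl)
next
  case (Cons i w)
  have iw: "is_word n w" and i: "i \<in> {1..n}" using Cons.prems by (auto simp: is_word_def)
  have "coxeq n k ([i] @ (w @ rev w) @ [i]) ([i] @ [] @ [i])"
    using coxeq_cong[OF Cons.IH[OF iw]] by blast
  moreover have "coxeq n k ([] @ [i,i] @ []) ([] @ [])" by (rule coxeq_cancel[OF i])
  ultimately show ?case by (auto intro: coxeq.trans)
qed

definition R :: "nat \<Rightarrow> nat \<Rightarrow> nat list \<Rightarrow> bool" where
  "R k m w \<longleftrightarrow> (\<exists>ts. length ts = m \<and> (\<forall>t\<in>set ts. refl_word 3 t) \<and> coxeq 3 k (concat ts) w)"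

lemma R_coxeq: "R k m w \<Longrightarrow> coxeq 3 k w w' \<Longrightarrow> R k m w'"
  unfolding R_def by (blast intro: coxeq.trans)

lemma R_nil: "R k 0 []"
  unfolding R_def by (auto intro: coxeq.refl)

lemma R_insert:
  assumes u: "is_word 3 u" and i: "i \<in> {1..3}" and h: "R k m (u @ v)"
  shows "R k (Suc m) (u @ [i] @ v)"
proof -
  obtain ts where ts: "length ts = m" "\<forall>t\<in>set ts. refl_word 3 t" "coxeq 3 k (concat ts) (u @ v)"
    using h unfolding R_def by blast
  let ?t = "u @ [i] @ rev u"
  have rt: "refl_word 3 ?t" using u i unfolding refl_word_def by blast
  have ru: "is_word 3 (rev u)" using u by (simp add: is_word_def)
  have c1: "coxeq 3 k ((u @ [i] @ rev u) @ concat ts @ []) ((u @ [i] @ rev u) @ (u @ v) @ [])"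
    by (rule coxeq_cong[OF ts(3)])
  have c2: "coxeq 3 k ((u @ [i]) @ (rev u @ rev (rev u)) @ v) ((u @ [i]) @ [] @ v)"
    by (rule coxeq_cong[OF coxeq_rev[OF ru]])
  have "coxeq 3 k (concat (?t # ts)) (u @ [i] @ v)"
    using c1 c2 by (auto intro: coxeq.trans)
  then show ?thesis unfolding R_def using ts rt
    by (intro exI[of _ "?t # ts"]) auto
qed

lemma R_cancel:
  assumes "i \<in> {1..3}" "R k m (u @ v)"
  shows "R k m (u @ [i,i] @ v)"
  using assms by (blast intro: R_coxeq coxeq.sym coxeq_cancel)

lemma R_alt:
  assumes "a \<in> {1..3}" "b \<in> {1..3}" "a \<noteq> b" "R k m (u @ v)"
  shows "R k m (u @ concat (replicate k [a,b]) @ v)"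
  using assms by (blast intro: R_coxeq coxeq.sym coxeq_alt)

definition Z :: "nat \<Rightarrow> nat \<Rightarrow> nat \<Rightarrow> nat \<Rightarrow> nat list" where
  "Z a b c m = concat (replicate m [a,b,c]) @ [a,b]"

lemma rep_comm: "concat (replicate n xs) @ xs = xs @ concat (replicate n xs)"
  by (induction n) auto

lemma rep_Suc_end: "concat (replicate (Suc m) xs) = concat (replicate m xs) @ xs"
  by (simp add: rep_comm)

lemma Z_split: "Z a b c (A + 1 + B) = Z a b c A @ [c] @ Z a b c B"
  by (simp add: Z_def replicate_add rep_comm[of _ "[a,b,c]", simplified])

lemma Z_Suc_front: "Z a b c (Suc A) = [a,b,c] @ Z a b c A"
  by (simp add: Z_def)

lemma rot: "a # concat (replicate n [b,c,a]) = concat (replicate n [a,b,c]) @ [a]"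
  by (induction n) auto

lemma Z_rot: "Z a b c (Suc m) = [a] @ Z b c a m @ [a,b]"
proof -
  have "[a] @ Z b c a m @ [a,b] = ([a] @ concat (replicate m [b,c,a])) @ [b,c,a,b]"
    by (simp add: Z_def)
  also have "\<dots> = concat (replicate m [a,b,c]) @ [a,b,c,a,b]" by (simp add: rot)
  also have "\<dots> = Z a b c (Suc m)" using rep_comm[of m "[a,b,c]"] by (simp add: Z_def)
  finally show ?thesis by simp
qed

lemma is_word_Z: "a \<in> {1..3} \<Longrightarrow> b \<in> {1..3} \<Longrightarrow> c \<in> {1..3} \<Longrightarrow> is_word 3 (Z a b c m)"
  by (auto simp: Z_def is_word_def)

lemma R_delc:
  assumes abc: "a \<in> {1..3}" "b \<in> {1..3}" "c \<in> {1..3}"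
  shows "is_word 3 u \<Longrightarrow> R k m0 (u @ concat (replicate (Suc n) [a,b]) @ v) \<Longrightarrow> R k (m0 + n) (u @ Z a b c n @ v)"
proof (induction n arbitrary: m0 v)
  case 0 then show ?case by (simp add: Z_def)
next
  case (Suc n)
  have "R k m0 (u @ concat (replicate (Suc n) [a,b]) @ ([a,b] @ v))"
    using Suc.prems(2) rep_Suc_end[of "Suc n" "[a,b]"] by (metis append_assoc)
  then have "R k (m0 + n) (u @ Z a b c n @ ([a,b] @ v))" using Suc.IH Suc.prems(1) by blast
  then have "R k (Suc (m0 + n)) ((u @ Z a b c n) @ [c] @ ([a,b] @ v))"
    by (intro R_insert) (use Suc.prems(1) abc is_word_Z in \<open>auto simp: is_word_def\<close>)
  moreover have "Z a b c n @ [c] @ [a,b] = Z a b c (Suc n)"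
    using rep_comm[of n "[a,b,c]"] by (simp add: Z_def)
  ultimately show ?case by (metis add_Suc_right append_assoc)
qed

lemma R_jump:
  assumes k3: "k \<ge> 3" and abc: "a \<in> {1..3}" "b \<in> {1..3}" "c \<in> {1..3}" "a \<noteq> b"
  shows "1 \<le> t \<Longrightarrow> is_word 3 u \<Longrightarrow> R k m0 (u @ v)
     \<Longrightarrow> R k (m0 + t * (k - 2) + 1) (u @ Z a b c (t * k - 1) @ v)"
proof (induction t arbitrary: m0 u v)
  case 0 then show ?case by simp
next
  case (Suc t)
  have kk: "k = Suc (k - 1)" using k3 by simp
  have A: "R k m0 (u @ concat (replicate k [a,b]) @ v)"
    by (rule R_alt) (use abc Suc.prems in auto)
  show ?case
  proof (cases "t = 0")
    case True
    have "R k m0 (u @ concat (replicate (Suc (k - 1)) [a,b]) @ v)" using A kk by simp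
    then have "R k (m0 + (k - 1)) (u @ Z a b c (k - 1) @ v)"
      using R_delc[OF abc(1-3)] Suc.prems(2) by blast
    moreover have "m0 + (k - 1) = m0 + Suc t * (k - 2) + 1" using True k3 by simp
    moreover have "Suc t * k - 1 = k - 1" using True by simp
    ultimately show ?thesis by metis
  next
    case False
    have "concat (replicate k [a,b]) = [a,b] @ concat (replicate (k - 1) [a,b])"
      by (subst kk) simp
    then have "R k m0 ((u @ [a,b]) @ concat (replicate (k - 1) [a,b]) @ v)" using A by simp
    then have "R k m0 ((u @ [a,b]) @ [c,c] @ concat (replicate (k - 1) [a,b]) @ v)"
      by (rule R_cancel[OF abc(3)])
    then have "R k m0 ((u @ [a,b,c]) @ ([c] @ concat (replicate (k - 1) [a,b]) @ v))" by simp
    moreover have "is_word 3 (u @ [a,b,c])" using Suc.prems(2) abc by (auto simp: is_word_def)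
    ultimately have "R k (m0 + t * (k - 2) + 1)
       ((u @ [a,b,c]) @ Z a b c (t * k - 1) @ ([c] @ concat (replicate (k - 1) [a,b]) @ v))"
      using Suc.IH[of "u @ [a,b,c]" m0 "[c] @ concat (replicate (k - 1) [a,b]) @ v"] False by fastforce
    then have "R k (m0 + t * (k - 2) + 1)
       ((u @ [a,b,c] @ Z a b c (t * k - 1) @ [c]) @ concat (replicate (Suc (k - 2)) [a,b]) @ v)"
      using k3 by (simp add: Suc_diff_Suc numeral_2_eq_2)
    moreover have "is_word 3 (u @ [a,b,c] @ Z a b c (t * k - 1) @ [c])"
      using Suc.prems(2) abc is_word_Z[OF abc(1-3)] by (auto simp: is_word_def)
    ultimately have B: "R k (m0 + t * (k - 2) + 1 + (k - 2))
       ((u @ [a,b,c] @ Z a b c (t * k - 1) @ [c]) @ Z a b c (k - 2) @ v)"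
      using R_delc[OF abc(1-3)] by blast
    have tk: "t * k \<ge> 1" using False k3 by simp
    have e: "Suc t * k - 1 = Suc (t * k - 1) + 1 + (k - 2)" using tk k3 by simp
    have "Z a b c (Suc t * k - 1) = [a,b,c] @ Z a b c (t * k - 1) @ [c] @ Z a b c (k - 2)"
      unfolding e Z_split Z_Suc_front by simp
    moreover have "m0 + t * (k - 2) + 1 + (k - 2) = m0 + Suc t * (k - 2) + 1" by simp
    ultimately show ?thesis using B by (metis append_assoc)
  qed
qed

definition cst :: "nat \<Rightarrow> nat \<Rightarrow> nat" where
  "cst k m = ((m + 1) div k) * (k - 2) + 1 + (m + 1) mod k"

lemma R_main:
  assumes k3: "k \<ge> 3"
  shows "a \<in> {1..3} \<Longrightarrow> b \<in> {1..3} \<Longrightarrow> c \<in> {1..3} \<Longrightarrow> a \<noteq> b \<Longrightarrow> b \<noteq> c \<Longrightarrow> c \<noteq> a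
    \<Longrightarrow> is_word 3 u \<Longrightarrow> R k m0 (u @ v) \<Longrightarrow> R k (m0 + cst k m) (u @ Z a b c m @ v)"
proof (induction m arbitrary: a b c u v m0)
  case 0
  have c0: "cst k 0 = 2" using k3 by (simp add: cst_def)
  have "R k (Suc m0) (u @ [b] @ v)" by (rule R_insert) (use 0 in auto)
  then have "R k (Suc (Suc m0)) (u @ [a] @ ([b] @ v))" by (intro R_insert) (use 0 in auto)
  then show ?case using c0 by (simp add: Z_def)
next
  case (Suc m)
  show ?case
  proof (cases "(Suc m + 1) mod k = 0")
    case True
    define q where "q = (Suc m + 1) div k"
    have qk: "q * k = Suc m + 1" using True q_def by (metis div_mult_mod_eq add_0_right)
    have q1: "1 \<le> q" using qk by (cases q) auto
    have "R k (m0 + q * (k - 2) + 1) (u @ Z a b c (q * k - 1) @ v)"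
      by (rule R_jump[OF k3]) (use Suc.prems q1 in auto)
    moreover have "cst k (Suc m) = q * (k - 2) + 1" using True by (simp add: cst_def q_def)
    moreover have "q * k - 1 = Suc m" using qk by simp
    ultimately show ?thesis by (metis add.assoc)
  next
    case False
    have cs: "cst k (Suc m) = Suc (cst k m)"
      using False unfolding cst_def
      by (simp add: div_Suc mod_Suc split: if_splits)
    have "R k m0 ((u @ [a]) @ [a] @ v)" using R_cancel[of a k m0 u v] Suc.prems by simp
    moreover have "is_word 3 (u @ [a])" using Suc.prems by (auto simp: is_word_def)
    ultimately have "R k (m0 + cst k m) ((u @ [a]) @ Z b c a m @ ([a] @ v))"
      using Suc.IH[of b c a "u @ [a]" m0 "[a] @ v"] Suc.prems by auto
    then have "R k (m0 + cst k m) ((u @ [a] @ Z b c a m @ [a]) @ v)" by simp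
    then have "R k (Suc (m0 + cst k m)) ((u @ [a] @ Z b c a m @ [a]) @ [b] @ v)"
      by (rule R_insert[rotated 2]) (use Suc.prems is_word_Z[of b c a m] in \<open>auto simp: is_word_def\<close>)
    then show ?thesis using cs by (simp add: Z_rot)
  qed
qed

lemma lR_le: "R k m w \<Longrightarrow> lR 3 k w \<le> m"
  unfolding lR_def R_def by (rule Least_le) blast

lemma cst_int:
  assumes k3: "k \<ge> 3"
  shows "int (cst k m) = int m + 2 - 2 * int ((m + 1) div k)"
proof -
  define q where "q = (m + 1) div k"
  define j where "j = (m + 1) mod k"
  have e: "q * k + j = m + 1" unfolding q_def j_def by simp
  have e': "int q * int k + int j = int m + 1" using e by (metis of_nat_add of_nat_mult of_nat_1)
  have "int (cst k m) = int q * (int k - 2) + 1 + int j"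
    using k3 by (simp add: cst_def q_def j_def of_nat_diff)
  also have "\<dots> = int m + 2 - 2 * int q" using e' by (simp add: algebra_simps)
  finally show ?thesis by (simp add: q_def)
qed

theorem mainTheorem13:
  fixes k lam r :: nat
  assumes "k \<ge> 3" and "1 \<le> r" and "r \<le> 3"
  shows "int (lR 3 k (concat (replicate lam [1, 2, 3]) @ [1..<r + 1]))
           \<le> int lam + int r
              - 2 * ((int lam + (if r \<ge> 2 then 1 else 0)) div int k)"
proof -
  have k3: "k \<ge> 3" by fact
  have zd: "\<And>a. int a div int k = int (a div k)" by (simp add: zdiv_int)
  have r: "r = 1 \<or> r = 2 \<or> r = 3" using assms by auto
  moreover {
    assume r1: "r = 1"
    have "int (lR 3 k (concat (replicate lam [1, 2, 3]) @ [1])) \<le> int lam + 1 - 2 * (int lam div int k)"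
    proof (cases lam)
      case 0
      have "R k (Suc 0) ([] @ [1] @ [])" by (rule R_insert) (auto simp: is_word_def R_nil)
      then have "lR 3 k [1] \<le> 1" using lR_le by fastforce
      then show ?thesis using 0 by simp
    next
      case (Suc l)
      have "R k 0 ([] @ [1,1] @ [])" by (rule R_cancel) (auto simp: R_nil)
      then have "R k (0 + cst k l) ([1] @ Z 2 3 1 l @ [1])"
        by (intro R_main[OF k3]) (auto simp: is_word_def)
      moreover have "[1] @ Z 2 3 1 l @ [1] = concat (replicate lam [1, 2, 3]) @ [1]"
        using Suc rot[of "1::nat" l 2 3] rep_Suc_end[of l "[1,2,3::nat]"] by (simp add: Z_def del: One_nat_def)
      ultimately have "lR 3 k (concat (replicate lam [1, 2, 3]) @ [1]) \<le> cst k l"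
        using lR_le by (metis add_0)
      then have "int (lR 3 k (concat (replicate lam [1, 2, 3]) @ [1])) \<le> int (cst k l)" by simp
      also have "\<dots> = int lam + 1 - 2 * (int lam div int k)"
        using cst_int[OF k3, of l] Suc zd[of "Suc l"] by (simp add: add.commute)
      finally show ?thesis .
    qed
    then have ?thesis using r1 by simp
  }
  moreover {
    assume r2: "r = 2"
    have "R k (0 + cst k lam) ([] @ Z 1 2 3 lam @ [])"
      by (intro R_main[OF k3]) (auto simp: is_word_def R_nil)
    then have "lR 3 k (Z 1 2 3 lam) \<le> cst k lam" using lR_le by fastforce
    then have "int (lR 3 k (Z 1 2 3 lam)) \<le> int lam + 2 - 2 * int ((lam + 1) div k)"
      using cst_int[OF k3, of lam] by simp
    moreover have "[1..<r + 1] = [1,2]" using r2 by (simp add: upt_rec)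
    moreover have "(int lam + 1) div int k = int ((lam + 1) div k)" using zd[of "lam + 1"] by (simp add: add.commute)
    ultimately have ?thesis using r2 by (simp add: Z_def)
  }
  moreover {
    assume r3: "r = 3"
    have "R k (0 + cst k lam) ([] @ Z 1 2 3 lam @ [])"
      by (intro R_main[OF k3]) (auto simp: is_word_def R_nil)
    then have "R k (Suc (cst k lam)) (Z 1 2 3 lam @ [3] @ [])"
      by (intro R_insert) (auto simp: is_word_Z)
    then have "lR 3 k (Z 1 2 3 lam @ [3]) \<le> Suc (cst k lam)" using lR_le by fastforce
    then have "int (lR 3 k (Z 1 2 3 lam @ [3])) \<le> int lam + 3 - 2 * int ((lam + 1) div k)"
      using cst_int[OF k3, of lam] by simp
    moreover have "[1..<r + 1] = [1,2,3]" using r3 by (simp add: upt_rec)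
    moreover have "(int lam + 1) div int k = int ((lam + 1) div k)" using zd[of "lam + 1"] by (simp add: add.commute)
    ultimately have ?thesis using r3 by (simp add: Z_def)
  }
  ultimately show ?thesis by blast
qed

end
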